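(* Let $r_1,r_2$ be positive integers. Then $\psi_{d,\min}(M_{r_1,r_2}(K_2))=2$ if and only if $r_1\ge 2$ and $r_2\ge 2$. Moreover, if $r_1,r_2\ge 2$ then there is a homomorphism $M_{r_1,r_2}(K_2)\to S_4$, while for all positive integers $r$ and $m$ there is no homomorphism $M_{1,r}(K_2)\to S_m$ and no homomorphism $M_{r,1}(K_2)\to S_m$.
   Context: For a graph $G$ and positive integer $r$, the generalized Mycielskian $M_r(G)$ has vertex set $\{(v,i):v\in V(G),0\le i\le r-1\}\cup\{z\}$, with $(u,i)$ adjacent to $(v,j)$ iff $\{u,v\}\in E(G)$ and ($|i-j|=1$ or $i=j=0$), and $z$ adjacent to all $(v,r-1)$, $v\in V(G)$. $M_{r_1,r_2}(G)=M_{r_2}(M_{r_1}(G))$. For a digraph $D$, $N_+[v]=\{v\}\cup\{u:(v,u)\in E(D)\}$, $c(U)=\{c(u):u\in U\}$, and $\psi_d(D)=\min_c\max_v|c(N_+[v])|$ over proper colorings $c$ of the underlying graph; $\psi_{d,\min}(G)$ is the minimum of $\psi_d(\vec G)$ over all orientations $\vec G$ of $G$. The symmetric shift graph $S_m$ has vertex set $\{(i,j):1\le i,j\le m,\ i\ne j\}$, and $(i,j)$ is adjacent to $(k,\ell)$ iff $j=k$ or $i=\ell$. *)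

theory Defs
  imports Main
begin

type_synonym 'a graph = "'a set \<times> 'a set set"

definition gverts :: "'a graph \<Rightarrow> 'a set" where "gverts G = fst G"
definition gedges :: "'a graph \<Rightarrow> 'a set set" where "gedges G = snd G"

definition K2 :: "nat graph" where
  "K2 = ({0, 1}, {{0, 1}})"

datatype 'a myc_vertex = MV 'a nat | Apex

definition mycielski :: "nat \<Rightarrow> 'a graph \<Rightarrow> 'a myc_vertex graph" where
  "mycielski r G =
     ({MV v i | v i. v \<in> gverts G \<and> i < r} \<union> {Apex},
      {{MV u i, MV v j} | u v i j. {u, v} \<in> gedges G \<and> u \<in> gverts G \<and> v \<in> gverts G
          \<and> i < r \<and> j < r \<and> (i = j + 1 \<or> j = i + 1 \<or> (i = 0 \<and> j = 0))}
      \<union> {{Apex, MV v (r - 1)} | v. v \<in> gverts G})"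

definition mycielski2 :: "nat \<Rightarrow> nat \<Rightarrow> 'a graph \<Rightarrow> 'a myc_vertex myc_vertex graph" where
  "mycielski2 r1 r2 G = mycielski r2 (mycielski r1 G)"

definition shift_graph :: "nat \<Rightarrow> (nat \<times> nat) graph" where
  "shift_graph m =
     ({(i, j). 1 \<le> i \<and> i \<le> m \<and> 1 \<le> j \<and> j \<le> m \<and> i \<noteq> j},
      {{(i, j), (k, l)} | i j k l.
          1 \<le> i \<and> i \<le> m \<and> 1 \<le> j \<and> j \<le> m \<and> i \<noteq> j \<and>
          1 \<le> k \<and> k \<le> m \<and> 1 \<le> l \<and> l \<le> m \<and> k \<noteq> l \<and>
          (j = k \<or> i = l)})"

definition graph_hom :: "('a \<Rightarrow> 'b) \<Rightarrow> 'a graph \<Rightarrow> 'b graph \<Rightarrow> bool" where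
  "graph_hom f G H \<longleftrightarrow>
     (\<forall>v\<in>gverts G. f v \<in> gverts H) \<and>
     (\<forall>u v. {u, v} \<in> gedges G \<longrightarrow> {f u, f v} \<in> gedges H)"

definition orientation :: "'a graph \<Rightarrow> ('a \<times> 'a) set \<Rightarrow> bool" where
  "orientation G A \<longleftrightarrow>
     A \<subseteq> {(u, v). u \<noteq> v \<and> {u, v} \<in> gedges G} \<and>
     (\<forall>u v. u \<noteq> v \<and> {u, v} \<in> gedges G \<longrightarrow> ((u, v) \<in> A \<longleftrightarrow> (v, u) \<notin> A))"

definition proper_coloring :: "'a graph \<Rightarrow> ('a \<Rightarrow> nat) \<Rightarrow> bool" where
  "proper_coloring G c \<longleftrightarrow> (\<forall>u v. u \<noteq> v \<and> {u, v} \<in> gedges G \<longrightarrow> c u \<noteq> c v)"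

definition out_nbhd :: "('a \<times> 'a) set \<Rightarrow> 'a \<Rightarrow> 'a set" where
  "out_nbhd A v = {v} \<union> {u. (v, u) \<in> A}"

definition psi_d :: "'a graph \<Rightarrow> ('a \<times> 'a) set \<Rightarrow> nat" where
  "psi_d G A = (LEAST k. \<exists>c. proper_coloring G c \<and>
                   (\<forall>v\<in>gverts G. card (c ` out_nbhd A v) \<le> k))"

definition psi_d_min :: "'a graph \<Rightarrow> nat" where
  "psi_d_min G = (LEAST k. \<exists>A. orientation G A \<and> psi_d G A = k)"

end

theory Submission
  imports Defs
begin


definition adj :: "nat \<times> nat \<Rightarrow> nat \<times> nat \<Rightarrow> bool" where
  "adj P Q \<longleftrightarrow> snd P = fst Q \<or> fst P = snd Q"

lemma adj_sym: "adj P Q \<Longrightarrow> adj Q P" by (auto simp: adj_def)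

definition SL :: "'a graph \<Rightarrow> ('a \<Rightarrow> nat \<times> nat) \<Rightarrow> bool" where
  "SL G f \<longleftrightarrow> (\<forall>v\<in>gverts G. fst (f v) \<noteq> snd (f v)) \<and>
     (\<forall>u v. u \<noteq> v \<and> {u,v} \<in> gedges G \<longrightarrow> adj (f u) (f v))"

definition wfG :: "'a graph \<Rightarrow> bool" where
  "wfG G \<longleftrightarrow> finite (gverts G) \<and> (\<forall>e\<in>gedges G. e \<subseteq> gverts G)"

lemma SL_adj: "SL G f \<Longrightarrow> {u,v} \<in> gedges G \<Longrightarrow> u \<noteq> v \<Longrightarrow> adj (f u) (f v)"
  by (simp add: SL_def)
lemma SL_vert: "SL G f \<Longrightarrow> v \<in> gverts G \<Longrightarrow> fst (f v) \<noteq> snd (f v)"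
  by (simp add: SL_def)

lemma tri_unique:
  assumes "fst P \<noteq> snd P" "fst Q \<noteq> snd Q" "fst S \<noteq> snd S" "fst T \<noteq> snd T"
    "adj P Q" "adj Q S" "adj P S" "adj T Q" "adj T S"
  shows "T = P"
  using assms by (cases P; cases Q; cases S; cases T) (auto simp: adj_def)

lemma tri_type:
  assumes "fst P \<noteq> snd P" "fst A \<noteq> snd A" "fst B \<noteq> snd B"
    "adj P A" "adj P B" "adj A B"
  shows "(fst A = snd P) \<noteq> (fst B = snd P)"
  using assms by (cases P; cases A; cases B) (auto simp: adj_def)

lemma myc_verts: "gverts (mycielski r G) = {MV v i | v i. v \<in> gverts G \<and> i < r} \<union> {Apex}"
  by (simp add: mycielski_def gverts_def)

lemma myc_edges: "gedges (mycielski r G) =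
      {{MV u i, MV v j} | u v i j. {u, v} \<in> gedges G \<and> u \<in> gverts G \<and> v \<in> gverts G
          \<and> i < r \<and> j < r \<and> (i = j + 1 \<or> j = i + 1 \<or> (i = 0 \<and> j = 0))}
      \<union> {{Apex, MV v (r - 1)} | v. v \<in> gverts G}"
  by (simp add: mycielski_def gedges_def)

lemma myc_vert_MV: "v \<in> gverts G \<Longrightarrow> i < r \<Longrightarrow> MV v i \<in> gverts (mycielski r G)"
  by (auto simp: myc_verts)
lemma myc_vert_Apex: "Apex \<in> gverts (mycielski r G)"
  by (auto simp: myc_verts)

lemma myc_edge_MV: "{u,v} \<in> gedges G \<Longrightarrow> u \<in> gverts G \<Longrightarrow> v \<in> gverts G \<Longrightarrow> i < r \<Longrightarrow> j < r
  \<Longrightarrow> i = j + 1 \<or> j = i + 1 \<or> (i = 0 \<and> j = 0) \<Longrightarrow> {MV u i, MV v j} \<in> gedges (mycielski r G)"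
  unfolding myc_edges by blast

lemma myc_edge_Apex: "v \<in> gverts G \<Longrightarrow> {Apex, MV v (r - 1)} \<in> gedges (mycielski r G)"
  unfolding myc_edges by blast

lemma myc_edgeE:
  assumes "{x,y} \<in> gedges (mycielski r G)"
  obtains a b i j where "{a,b} \<in> gedges G" "a \<in> gverts G" "b \<in> gverts G" "i < r" "j < r"
     "i = j + 1 \<or> j = i + 1 \<or> (i = 0 \<and> j = 0)"
     "(x = MV a i \<and> y = MV b j) \<or> (x = MV b j \<and> y = MV a i)"
  | a where "a \<in> gverts G" "(x = Apex \<and> y = MV a (r - 1)) \<or> (y = Apex \<and> x = MV a (r - 1))"
  using assms unfolding myc_edges by (auto simp: doubleton_eq_iff)

lemma wfG_myc: assumes "wfG G" "r \<ge> 1" shows "wfG (mycielski r G)"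
proof -
  have "gverts (mycielski r G) = (\<lambda>(v,i). MV v i) ` (gverts G \<times> {..<r}) \<union> {Apex}"
    by (auto simp: myc_verts)
  hence "finite (gverts (mycielski r G))" using assms by (simp add: wfG_def)
  moreover have "\<forall>e\<in>gedges (mycielski r G). e \<subseteq> gverts (mycielski r G)"
    using assms(2) unfolding myc_edges myc_verts by auto
  ultimately show ?thesis by (simp add: wfG_def)
qed

lemma K2_verts: "gverts K2 = {0,1}" by (simp add: K2_def gverts_def)
lemma K2_edges: "gedges K2 = {{0,1}}" by (simp add: K2_def gedges_def)
lemma wfG_K2: "wfG K2" by (simp add: wfG_def K2_verts K2_edges)



lemma out_nbhd_sub:
  assumes "wfG G" "orientation G A" "v \<in> gverts G"
  shows "out_nbhd A v \<subseteq> gverts G"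
proof
  fix w assume "w \<in> out_nbhd A v"
  then consider "w = v" | "(v,w) \<in> A" by (auto simp: out_nbhd_def)
  then show "w \<in> gverts G"
  proof cases
    case 2
    then have "{v,w} \<in> gedges G" using assms(2) by (auto simp: orientation_def)
    then show ?thesis using assms(1) by (auto simp: wfG_def)
  qed (use assms in auto)
qed

lemma out_nbhd_fin:
  assumes "wfG G" "orientation G A" "v \<in> gverts G"
  shows "finite (out_nbhd A v)"
  using out_nbhd_sub[OF assms] assms(1) finite_subset by (auto simp: wfG_def)

lemma SL_of_hom:
  assumes "graph_hom f G (shift_graph m)" shows "SL G f"
  unfolding SL_def
proof (intro conjI allI impI ballI)
  fix v assume "v \<in> gverts G"
  then have "f v \<in> gverts (shift_graph m)" using assms by (simp add: graph_hom_def)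
  then show "fst (f v) \<noteq> snd (f v)" by (auto simp: shift_graph_def gverts_def)
next
  fix u v assume "u \<noteq> v \<and> {u, v} \<in> gedges G"
  then have "{f u, f v} \<in> gedges (shift_graph m)" using assms by (simp add: graph_hom_def)
  then show "adj (f u) (f v)"
    by (auto simp: shift_graph_def gedges_def adj_def doubleton_eq_iff)
qed

lemma SL_of_psi:
  assumes wf: "wfG G" and or: "orientation G A" and pc: "proper_coloring G c"
    and cd: "\<forall>v\<in>gverts G. card (c ` out_nbhd A v) \<le> 2"
  shows "\<exists>f. SL G f"
proof -
  define d where "d v = (if \<exists>u. (v,u) \<in> A then c (SOME u. (v,u) \<in> A) else Suc (c v))" for v
  have arc: "u \<noteq> w \<and> {u,w} \<in> gedges G" if "(u,w) \<in> A" for u w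
    using that or by (auto simp: orientation_def)
  have key: "d u = c v" if "(u,v) \<in> A" for u v
  proof -
    define w where "w = (SOME w. (u,w) \<in> A)"
    have uw: "(u,w) \<in> A" unfolding w_def using that by (rule someI)
    have du: "d u = c w" using that by (auto simp: d_def w_def)
    have uV: "u \<in> gverts G" using arc[OF that] wf by (auto simp: wfG_def)
    have sub: "{c u, c v, c w} \<subseteq> c ` out_nbhd A u" using that uw by (auto simp: out_nbhd_def)
    have fin: "finite (c ` out_nbhd A u)" using out_nbhd_fin[OF wf or uV] by simp
    have "card {c u, c v, c w} \<le> 2" using card_mono[OF fin sub] cd uV le_trans by blast
    moreover have "c u \<noteq> c v" using pc arc[OF that] by (auto simp: proper_coloring_def)
    moreover have "c u \<noteq> c w" using pc arc[OF uw] by (auto simp: proper_coloring_def)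
    ultimately have "c w = c v"
    proof (rule_tac ccontr)
      assume "card {c u, c v, c w} \<le> 2" "c u \<noteq> c v" "c u \<noteq> c w" "c w \<noteq> c v"
      then have "card {c u, c v, c w} = 3" by simp
      with \<open>card {c u, c v, c w} \<le> 2\<close> show False by simp
    qed
    then show ?thesis using du by simp
  qed
  have "SL G (\<lambda>v. (c v, d v))"
    unfolding SL_def
  proof (intro conjI allI impI ballI)
    fix v assume "v \<in> gverts G"
    show "fst (c v, d v) \<noteq> snd (c v, d v)"
    proof (cases "\<exists>u. (v,u) \<in> A")
      case True
      then obtain u where "(v,u) \<in> A" by blast
      then show ?thesis using key[of v u] pc arc[of v u] by (auto simp: proper_coloring_def)
    qed (simp add: d_def)
  next
    fix u v assume a: "u \<noteq> v \<and> {u, v} \<in> gedges G"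
    then have "(u,v) \<in> A \<or> (v,u) \<in> A" using or by (auto simp: orientation_def)
    then show "adj (c u, d u) (c v, d v)" using key by (auto simp: adj_def)
  qed
  then show ?thesis by blast
qed

lemma psi_of_SL:
  assumes wf: "wfG G" and sl: "SL G f"
  shows "\<exists>A. orientation G A \<and> proper_coloring G (\<lambda>v. fst (f v)) \<and>
      (\<forall>v\<in>gverts G. card ((\<lambda>v. fst (f v)) ` out_nbhd A v) \<le> 2)"
proof -
  define A where "A = {(u,v). u \<noteq> v \<and> {u,v} \<in> gedges G \<and> snd (f u) = fst (f v) \<and>
      (fst (f u) = snd (f v) \<longrightarrow> fst (f u) < fst (f v))}"
  have inV: "u \<in> gverts G" "v \<in> gverts G" if "{u,v} \<in> gedges G" for u v
    using that wf by (auto simp: wfG_def)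
  have fd: "fst (f u) \<noteq> fst (f v)" if "u \<noteq> v" "{u,v} \<in> gedges G" for u v
    using SL_adj[OF sl that(2,1)] SL_vert[OF sl inV(1)[OF that(2)]] SL_vert[OF sl inV(2)[OF that(2)]]
    by (auto simp: adj_def)
  have "orientation G A"
    unfolding orientation_def
  proof (intro conjI allI impI)
    show "A \<subseteq> {(u, v). u \<noteq> v \<and> {u, v} \<in> gedges G}" by (auto simp: A_def)
  next
    fix u v assume a: "u \<noteq> v \<and> {u, v} \<in> gedges G"
    then have e2: "{v,u} \<in> gedges G" by (metis insert_commute)
    have "adj (f u) (f v)" using SL_adj[OF sl] a by blast
    moreover have "fst (f u) \<noteq> fst (f v)" using fd a by blast
    ultimately have "(snd (f u) = fst (f v) \<and> (fst (f u) = snd (f v) \<longrightarrow> fst (f u) < fst (f v)))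
       \<noteq> (snd (f v) = fst (f u) \<and> (fst (f v) = snd (f u) \<longrightarrow> fst (f v) < fst (f u)))"
      unfolding adj_def by linarith
    then show "((u, v) \<in> A) = ((v, u) \<notin> A)" using a e2 unfolding A_def by auto
  qed
  moreover have "proper_coloring G (\<lambda>v. fst (f v))"
    using fd by (auto simp: proper_coloring_def)
  moreover have "card ((\<lambda>v. fst (f v)) ` out_nbhd A v) \<le> 2" for v
  proof -
    have "(\<lambda>v. fst (f v)) ` out_nbhd A v \<subseteq> {fst (f v), snd (f v)}"
      by (auto simp: out_nbhd_def A_def)
    then have "card ((\<lambda>v. fst (f v)) ` out_nbhd A v) \<le> card {fst (f v), snd (f v)}"
      by (rule card_mono[rotated]) simp
    also have "\<dots> \<le> 2" by (simp add: card_insert_if)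
    finally show ?thesis .
  qed
  ultimately show ?thesis by blast
qed

lemma orientation_exists:
  assumes "wfG G" shows "\<exists>A. orientation G A"
proof -
  obtain h :: "'a \<Rightarrow> nat" where h: "inj_on h (gverts G)"
    using finite_imp_inj_to_nat_seg assms unfolding wfG_def by metis
  define A where "A = {(u,v). u \<noteq> v \<and> {u,v} \<in> gedges G \<and> h u < h v}"
  have "orientation G A"
    unfolding orientation_def
  proof (intro conjI allI impI)
    show "A \<subseteq> {(u, v). u \<noteq> v \<and> {u, v} \<in> gedges G}" by (auto simp: A_def)
  next
    fix u v assume a: "u \<noteq> v \<and> {u, v} \<in> gedges G"
    then have "u \<in> gverts G" "v \<in> gverts G" using assms by (auto simp: wfG_def)
    then have "h u \<noteq> h v" using h a by (metis inj_onD)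
    moreover have "{v,u} \<in> gedges G" using a by (metis insert_commute)
    ultimately show "((u, v) \<in> A) = ((v, u) \<notin> A)" using a by (auto simp: A_def)
  qed
  then show ?thesis by blast
qed

lemma P_exists:
  assumes wf: "wfG G" and or: "orientation G A"
  shows "\<exists>k c. proper_coloring G c \<and> (\<forall>v\<in>gverts G. card (c ` out_nbhd A v) \<le> k)"
proof -
  obtain h :: "'a \<Rightarrow> nat" where h: "inj_on h (gverts G)"
    using finite_imp_inj_to_nat_seg wf unfolding wfG_def by metis
  have "proper_coloring G h"
    unfolding proper_coloring_def
  proof (intro allI impI)
    fix u v assume a: "u \<noteq> v \<and> {u, v} \<in> gedges G"
    then have "u \<in> gverts G" "v \<in> gverts G" using wf by (auto simp: wfG_def)
    then show "h u \<noteq> h v" using h a by (metis inj_onD)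
  qed
  moreover have "\<forall>v\<in>gverts G. card (h ` out_nbhd A v) \<le> card (h ` gverts G)"
  proof
    fix v assume "v \<in> gverts G"
    then have "h ` out_nbhd A v \<subseteq> h ` gverts G" using out_nbhd_sub[OF wf or] by blast
    moreover have "finite (h ` gverts G)" using wf by (simp add: wfG_def)
    ultimately show "card (h ` out_nbhd A v) \<le> card (h ` gverts G)" by (simp add: card_mono)
  qed
  ultimately show ?thesis by blast
qed

lemma lower:
  assumes wf: "wfG G" and e: "{x,y} \<in> gedges G" "x \<noteq> y" and or: "orientation G A"
    and pc: "proper_coloring G c" and k: "\<forall>v\<in>gverts G. card (c ` out_nbhd A v) \<le> k"
  shows "2 \<le> k"
proof -
  have "(x,y) \<in> A \<or> (y,x) \<in> A" using or e by (auto simp: orientation_def)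
  moreover have "{y,x} \<in> gedges G" using e by (metis insert_commute)
  ultimately obtain u v where uv: "(u,v) \<in> A" "{u,v} \<in> gedges G" "u \<noteq> v"
    using e by blast
  have uV: "u \<in> gverts G" using uv wf by (auto simp: wfG_def)
  have "{c u, c v} \<subseteq> c ` out_nbhd A u" using uv by (auto simp: out_nbhd_def)
  then have "card {c u, c v} \<le> card (c ` out_nbhd A u)"
    using out_nbhd_fin[OF wf or uV] by (intro card_mono) auto
  moreover have "c u \<noteq> c v" using pc uv by (auto simp: proper_coloring_def)
  ultimately have "2 \<le> card (c ` out_nbhd A u)" by simp
  then show ?thesis using k uV by (meson le_trans)
qed

lemma psi_d_ge2:
  assumes wf: "wfG G" and e: "{x,y} \<in> gedges G" "x \<noteq> y" and or: "orientation G A"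
  shows "2 \<le> psi_d G A"
proof -
  have "\<exists>k. \<exists>c. proper_coloring G c \<and> (\<forall>v\<in>gverts G. card (c ` out_nbhd A v) \<le> k)"
    using P_exists[OF wf or] by blast
  from LeastI_ex[OF this] obtain c where "proper_coloring G c"
    "\<forall>v\<in>gverts G. card (c ` out_nbhd A v) \<le> psi_d G A"
    unfolding psi_d_def by blast
  then show ?thesis using lower[OF wf e or] by blast
qed

lemma psi_min_iff:
  assumes wf: "wfG G" and e: "{x,y} \<in> gedges G" "x \<noteq> y"
  shows "psi_d_min G = 2 \<longleftrightarrow> (\<exists>f. SL G f)"
proof
  assume h: "psi_d_min G = 2"
  obtain A0 where "orientation G A0" using orientation_exists[OF wf] by blast
  then have "\<exists>k A. orientation G A \<and> psi_d G A = k" by blast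
  from LeastI_ex[OF this] h obtain A where A: "orientation G A" "psi_d G A = 2"
    unfolding psi_d_min_def by auto
  have "\<exists>k. \<exists>c. proper_coloring G c \<and> (\<forall>v\<in>gverts G. card (c ` out_nbhd A v) \<le> k)"
    using P_exists[OF wf A(1)] by blast
  from LeastI_ex[OF this] A(2) obtain c where "proper_coloring G c"
    "\<forall>v\<in>gverts G. card (c ` out_nbhd A v) \<le> 2"
    unfolding psi_d_def by auto
  then show "\<exists>f. SL G f" using SL_of_psi[OF wf A(1)] by blast
next
  assume "\<exists>f. SL G f"
  then obtain f where "SL G f" by blast
  from psi_of_SL[OF wf this] obtain A where A: "orientation G A"
    "proper_coloring G (\<lambda>v. fst (f v))"
    "\<forall>v\<in>gverts G. card ((\<lambda>v. fst (f v)) ` out_nbhd A v) \<le> 2" by blast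
  have "psi_d G A \<le> 2" unfolding psi_d_def using A(2,3) by (intro Least_le) blast
  with psi_d_ge2[OF wf e A(1)] have pA: "psi_d G A = 2" by simp
  have le: "psi_d_min G \<le> 2" unfolding psi_d_min_def using A(1) pA by (intro Least_le) blast
  have "\<exists>k A. orientation G A \<and> psi_d G A = k" using A(1) by blast
  from LeastI_ex[OF this] obtain A' where "orientation G A'" "psi_d G A' = psi_d_min G"
    unfolding psi_d_min_def by blast
  with psi_d_ge2[OF wf e] have "2 \<le> psi_d_min G" by metis
  with le show "psi_d_min G = 2" by simp
qed



lemma K2_e01: "{0::nat,1} \<in> gedges K2" by (simp add: K2_edges)
lemma K2_e10: "{1::nat,0} \<in> gedges K2" by (simp add: K2_edges insert_commute)
lemma K2_v0: "(0::nat) \<in> gverts K2" by (simp add: K2_verts)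
lemma K2_v1: "(1::nat) \<in> gverts K2" by (simp add: K2_verts)

lemma imposs1:
  assumes r: "r \<ge> 1" and sl: "SL (mycielski2 1 r K2) f"
  shows False
proof -
  define G1 where "G1 = mycielski 1 K2"
  define a :: "nat myc_vertex" where "a = MV 0 0"
  define b :: "nat myc_vertex" where "b = MV 1 0"
  have G: "mycielski2 1 r K2 = mycielski r G1" by (simp add: mycielski2_def G1_def)
  have va: "a \<in> gverts G1" unfolding a_def G1_def by (rule myc_vert_MV[OF K2_v0]) simp
  have vb: "b \<in> gverts G1" unfolding b_def G1_def by (rule myc_vert_MV[OF K2_v1]) simp
  have vz: "Apex \<in> gverts G1" unfolding G1_def by (rule myc_vert_Apex)
  have eab: "{a,b} \<in> gedges G1" unfolding a_def b_def G1_def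
    by (rule myc_edge_MV[OF K2_e01 K2_v0 K2_v1]) auto
  have eba: "{b,a} \<in> gedges G1" using eab by (metis insert_commute)
  have eza: "{Apex,a} \<in> gedges G1" unfolding a_def G1_def using myc_edge_Apex[OF K2_v0, of 1] by simp
  have ezb: "{Apex,b} \<in> gedges G1" unfolding b_def G1_def using myc_edge_Apex[OF K2_v1, of 1] by simp
  have eaz: "{a,Apex} \<in> gedges G1" using eza by (metis insert_commute)
  have ebz: "{b,Apex} \<in> gedges G1" using ezb by (metis insert_commute)
  have nab: "a \<noteq> b" "a \<noteq> Apex" "b \<noteq> Apex" by (auto simp: a_def b_def)
  have sl': "SL (mycielski r G1) f" using sl G by simp
  let ?L = "\<lambda>x i. f (MV x i)"
  have E: "adj (?L x i) (?L y j)" if "{x,y} \<in> gedges G1" "x \<in> gverts G1" "y \<in> gverts G1"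
    "i < r" "j < r" "i = j + 1 \<or> j = i + 1 \<or> (i = 0 \<and> j = 0)" "x \<noteq> y" for x y i j
    using SL_adj[OF sl' myc_edge_MV[OF that(1-6)]] that(7) by simp
  have V: "fst (?L x i) \<noteq> snd (?L x i)" if "x \<in> gverts G1" "i < r" for x i
    using SL_vert[OF sl' myc_vert_MV[OF that]] .
  have r0: "0 < r" using r by simp
  have l0: "adj (?L a 0) (?L b 0)" "adj (?L b 0) (?L Apex 0)" "adj (?L a 0) (?L Apex 0)"
    using E[OF eab va vb r0 r0] E[OF ebz vb vz r0 r0] E[OF eaz va vz r0 r0] nab by auto
  have V0: "fst (?L a 0) \<noteq> snd (?L a 0)" "fst (?L b 0) \<noteq> snd (?L b 0)"
     "fst (?L Apex 0) \<noteq> snd (?L Apex 0)" using V va vb vz r0 by auto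
  have inv: "i < r \<longrightarrow> ?L a i = ?L a 0 \<and> ?L b i = ?L b 0 \<and> ?L Apex i = ?L Apex 0" for i
  proof (induction i)
    case 0 then show ?case by simp
  next
    case (Suc i)
    show ?case
    proof
      assume si: "Suc i < r"
      then have ir: "i < r" by simp
      with Suc.IH have IH: "?L a i = ?L a 0" "?L b i = ?L b 0" "?L Apex i = ?L Apex 0" by auto
      have c: "Suc i = i + 1 \<or> i = Suc i + 1 \<or> (Suc i = 0 \<and> i = 0)" by simp
      have A1: "adj (?L a (Suc i)) (?L b 0)" "adj (?L a (Suc i)) (?L Apex 0)"
        using E[OF eab va vb si ir c] E[OF eaz va vz si ir c] nab IH by auto
      have B1: "adj (?L b (Suc i)) (?L a 0)" "adj (?L b (Suc i)) (?L Apex 0)"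
        using E[OF eba vb va si ir c] E[OF ebz vb vz si ir c] nab IH by auto
      have C1: "adj (?L Apex (Suc i)) (?L a 0)" "adj (?L Apex (Suc i)) (?L b 0)"
        using E[OF eza vz va si ir c] E[OF ezb vz vb si ir c] nab IH by auto
      have "?L a (Suc i) = ?L a 0"
        by (rule tri_unique[OF V0(1) V0(2) V0(3) V[OF va si] l0 A1])
      moreover have "?L b (Suc i) = ?L b 0"
        by (rule tri_unique[OF V0(2) V0(1) V0(3) V[OF vb si] adj_sym[OF l0(1)] l0(3) l0(2) B1])
      moreover have "?L Apex (Suc i) = ?L Apex 0"
        by (rule tri_unique[OF V0(3) V0(1) V0(2) V[OF vz si] adj_sym[OF l0(3)] l0(1) adj_sym[OF l0(2)] C1])
      ultimately show "?L a (Suc i) = ?L a 0 \<and> ?L b (Suc i) = ?L b 0 \<and> ?L Apex (Suc i) = ?L Apex 0"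
        by simp
    qed
  qed
  have rr: "r - 1 < r" using r by simp
  from inv[of "r - 1"] rr have top: "?L a (r-1) = ?L a 0" "?L b (r-1) = ?L b 0" "?L Apex (r-1) = ?L Apex 0"
    by auto
  have ZA: "adj (f Apex) (?L x (r - 1))" if "x \<in> gverts G1" for x
    using SL_adj[OF sl' myc_edge_Apex[OF that]] by simp
  have Vz: "fst (f Apex) \<noteq> snd (f Apex)" using SL_vert[OF sl' myc_vert_Apex] .
  have "f Apex = ?L Apex 0"
    using tri_unique[OF V0(3) V0(1) V0(2) Vz adj_sym[OF l0(3)] l0(1) adj_sym[OF l0(2)]]
      ZA[OF va] ZA[OF vb] top by simp
  moreover have "adj (f Apex) (?L Apex 0)" using ZA[OF vz] top by simp
  ultimately show False using V0(3) by (simp add: adj_def)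
qed

lemma imposs2:
  assumes r: "r \<ge> 1" and sl: "SL (mycielski2 r 1 K2) f"
  shows False
proof -
  define C where "C = mycielski r K2"
  have G: "mycielski2 r 1 K2 = mycielski 1 C" by (simp add: mycielski2_def C_def)
  have sl': "SL (mycielski 1 C) f" using sl G by simp
  define P where "P = f Apex"
  define t where "t x = (fst (f (MV x 0)) = snd P)" for x
  have VP: "fst P \<noteq> snd P" unfolding P_def using SL_vert[OF sl' myc_vert_Apex] .
  have key: "t x \<noteq> t y" if "{x,y} \<in> gedges C" "x \<in> gverts C" "y \<in> gverts C" "x \<noteq> y" for x y
  proof -
    have exy: "adj (f (MV x 0)) (f (MV y 0))"
      using SL_adj[OF sl' myc_edge_MV[OF that(1-3), of 0 1 0]] that(4) by simp
    have ex: "adj P (f (MV x 0))" unfolding P_def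
      using SL_adj[OF sl' myc_edge_Apex[OF that(2), of 1]] by simp
    have ey: "adj P (f (MV y 0))" unfolding P_def
      using SL_adj[OF sl' myc_edge_Apex[OF that(3), of 1]] by simp
    have vx: "fst (f (MV x 0)) \<noteq> snd (f (MV x 0))" using SL_vert[OF sl' myc_vert_MV[OF that(2), of 0 1]] by simp
    have vy: "fst (f (MV y 0)) \<noteq> snd (f (MV y 0))" using SL_vert[OF sl' myc_vert_MV[OF that(3), of 0 1]] by simp
    show ?thesis unfolding t_def using tri_type[OF VP vx vy ex ey exy] .
  qed
  let ?a = "\<lambda>i. MV (0::nat) i" and ?b = "\<lambda>i. MV (1::nat) i"
  have vab: "?a i \<in> gverts C" "?b i \<in> gverts C" if "i < r" for i
    unfolding C_def using myc_vert_MV[OF K2_v0 that] myc_vert_MV[OF K2_v1 that] by auto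
  have inv: "i < r \<longrightarrow> t (?a i) \<noteq> t (?b i)" for i
  proof (induction i)
    case 0
    have "{?a 0, ?b 0} \<in> gedges C" unfolding C_def
      by (rule myc_edge_MV[OF K2_e01 K2_v0 K2_v1]) (use r in auto)
    then show ?case using key vab by auto
  next
    case (Suc i)
    show ?case
    proof
      assume si: "Suc i < r"
      then have ir: "i < r" by simp
      have e1: "{?a (Suc i), ?b i} \<in> gedges C" unfolding C_def
        by (rule myc_edge_MV[OF K2_e01 K2_v0 K2_v1 si ir]) simp
      have e2: "{?b (Suc i), ?a i} \<in> gedges C" unfolding C_def
        by (rule myc_edge_MV[OF K2_e10 K2_v1 K2_v0 si ir]) simp
      have "t (?a (Suc i)) \<noteq> t (?b i)" using key[OF e1 vab(1)[OF si] vab(2)[OF ir]] by simp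
      moreover have "t (?b (Suc i)) \<noteq> t (?a i)" using key[OF e2 vab(2)[OF si] vab(1)[OF ir]] by simp
      moreover have "t (?a i) \<noteq> t (?b i)" using Suc.IH ir by simp
      ultimately show "t (?a (Suc i)) \<noteq> t (?b (Suc i))" by auto
    qed
  qed
  have rr: "r - 1 < r" using r by simp
  have vA: "Apex \<in> gverts C" unfolding C_def by (rule myc_vert_Apex)
  have ea: "{Apex, ?a (r-1)} \<in> gedges C" unfolding C_def by (rule myc_edge_Apex[OF K2_v0])
  have eb: "{Apex, ?b (r-1)} \<in> gedges C" unfolding C_def by (rule myc_edge_Apex[OF K2_v1])
  have "t Apex \<noteq> t (?a (r-1))" using key[OF ea vA vab(1)[OF rr]] by simp
  moreover have "t Apex \<noteq> t (?b (r-1))" using key[OF eb vA vab(2)[OF rr]] by simp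
  moreover have "t (?a (r-1)) \<noteq> t (?b (r-1))" using inv rr by blast
  ultimately show False by auto
qed



lemma hom_comp: "graph_hom f G H \<Longrightarrow> graph_hom g H K \<Longrightarrow> graph_hom (g \<circ> f) G K"
  by (simp add: graph_hom_def)

lemma hom_map:
  assumes h: "graph_hom h G H"
  shows "graph_hom (map_myc_vertex h) (mycielski r G) (mycielski r H)"
  unfolding graph_hom_def
proof (intro conjI ballI allI impI)
  fix v assume "v \<in> gverts (mycielski r G)"
  then show "map_myc_vertex h v \<in> gverts (mycielski r H)"
    using h by (auto simp: myc_verts graph_hom_def)
next
  fix x y assume "{x,y} \<in> gedges (mycielski r G)"
  then show "{map_myc_vertex h x, map_myc_vertex h y} \<in> gedges (mycielski r H)"
  proof (cases rule: myc_edgeE)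
    case (1 a b i j)
    then have "{h a, h b} \<in> gedges H" "h a \<in> gverts H" "h b \<in> gverts H" using h by (auto simp: graph_hom_def)
    from myc_edge_MV[OF this 1(4-6)] 1(7) show ?thesis by (auto simp: insert_commute)
  next
    case (2 a)
    then have "h a \<in> gverts H" using h by (auto simp: graph_hom_def)
    from myc_edge_Apex[OF this, of r] 2(2) show ?thesis by (auto simp: insert_commute)
  qed
qed

definition fold_myc :: "nat \<Rightarrow> 'a myc_vertex \<Rightarrow> 'a myc_vertex" where
  "fold_myc d x = (case x of MV v i \<Rightarrow> MV v (i - d) | Apex \<Rightarrow> Apex)"

lemma hom_fold:
  assumes "1 \<le> r'" "r' \<le> r"
  shows "graph_hom (fold_myc (r - r')) (mycielski r G) (mycielski r' G)"
  unfolding graph_hom_def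
proof (intro conjI ballI allI impI)
  fix v assume "v \<in> gverts (mycielski r G)"
  then show "fold_myc (r - r') v \<in> gverts (mycielski r' G)"
    using assms by (auto simp: myc_verts fold_myc_def)
next
  fix x y assume "{x,y} \<in> gedges (mycielski r G)"
  then show "{fold_myc (r - r') x, fold_myc (r - r') y} \<in> gedges (mycielski r' G)"
  proof (cases rule: myc_edgeE)
    case (1 a b i j)
    have "{MV a (i - (r - r')), MV b (j - (r - r'))} \<in> gedges (mycielski r' G)"
      by (rule myc_edge_MV[OF 1(1-3)]) (use 1(4-6) assms in auto)
    then show ?thesis using 1(7) by (auto simp: fold_myc_def insert_commute)
  next
    case (2 a)
    have "r - 1 - (r - r') = r' - 1" using assms by simp
    with myc_edge_Apex[OF 2(1), of r'] 2(2) show ?thesis by (auto simp: insert_commute fold_myc_def)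
  qed
qed

definition g0 :: "nat myc_vertex myc_vertex \<Rightarrow> nat \<times> nat" where
  "g0 x = (case x of Apex \<Rightarrow> (2,4)
     | MV Apex j \<Rightarrow> (if j = 0 then (3,4) else (3,2))
     | MV (MV v i) j \<Rightarrow>
        (if v = 0 then (if i = 0 then (1,2) else if j = 0 then (1,3) else (4,2))
         else (if i = 0 then (if j = 0 then (2,1) else (4,1)) else (if j = 0 then (2,3) else (4,1)))))"

lemma shift_edge: "fst P \<noteq> snd P \<Longrightarrow> fst Q \<noteq> snd Q \<Longrightarrow> fst P \<in> {1..m} \<Longrightarrow> snd P \<in> {1..m}
  \<Longrightarrow> fst Q \<in> {1..m} \<Longrightarrow> snd Q \<in> {1..m} \<Longrightarrow> adj P Q \<Longrightarrow> {P,Q} \<in> gedges (shift_graph m)"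
  unfolding shift_graph_def gedges_def adj_def
  by (cases P; cases Q) auto

lemma g0_range: "fst (g0 v) \<noteq> snd (g0 v) \<and> fst (g0 v) \<in> {1..4} \<and> snd (g0 v) \<in> {1..4}"
  by (auto simp: g0_def split: myc_vertex.split)

lemma shift_vert: "fst P \<noteq> snd P \<Longrightarrow> fst P \<in> {1..m} \<Longrightarrow> snd P \<in> {1..m} \<Longrightarrow> P \<in> gverts (shift_graph m)"
  by (cases P) (auto simp: shift_graph_def gverts_def)

lemma hom_g0: "graph_hom g0 (mycielski 2 (mycielski 2 K2)) (shift_graph 4)"
  unfolding graph_hom_def
proof (intro conjI ballI allI impI)
  fix v assume "v \<in> gverts (mycielski 2 (mycielski 2 K2))"
  then show "g0 v \<in> gverts (shift_graph 4)"
    using g0_range[of v] by (intro shift_vert) auto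
next
  fix x y assume "{x,y} \<in> gedges (mycielski 2 (mycielski 2 K2))"
  then have "adj (g0 x) (g0 y) \<and> adj (g0 y) (g0 x)"
  proof (cases rule: myc_edgeE)
    case (1 a b i j)
    from 1(1) show ?thesis
    proof (cases rule: myc_edgeE)
      case (1 a' b' i' j')
      then show ?thesis using \<open>i < 2\<close> \<open>j < 2\<close> \<open>i = j + 1 \<or> j = i + 1 \<or> i = 0 \<and> j = 0\<close>
        \<open>x = MV a i \<and> y = MV b j \<or> x = MV b j \<and> y = MV a i\<close>
        by (auto simp: K2_edges K2_verts doubleton_eq_iff g0_def adj_def less_Suc_eq)
    next
      case (2 a')
      then show ?thesis using \<open>i < 2\<close> \<open>j < 2\<close> \<open>i = j + 1 \<or> j = i + 1 \<or> i = 0 \<and> j = 0\<close>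
        \<open>x = MV a i \<and> y = MV b j \<or> x = MV b j \<and> y = MV a i\<close>
        by (auto simp: K2_edges K2_verts doubleton_eq_iff g0_def adj_def less_Suc_eq)
    qed
  next
    case (2 a)
    then show ?thesis
      by (auto simp: myc_verts K2_verts g0_def adj_def less_Suc_eq split: if_splits)
  qed
  then show "{g0 x, g0 y} \<in> gedges (shift_graph 4)"
    using g0_range[of x] g0_range[of y] by (intro shift_edge) auto
qed



lemma wf_M2: "r1 \<ge> 1 \<Longrightarrow> r2 \<ge> 1 \<Longrightarrow> wfG (mycielski2 r1 r2 K2)"
  unfolding mycielski2_def by (intro wfG_myc wfG_K2) auto

lemma edge_M2: "r1 \<ge> 1 \<Longrightarrow> r2 \<ge> 1 \<Longrightarrow>
  {MV (MV (0::nat) 0) 0, MV (MV 1 0) 0} \<in> gedges (mycielski2 r1 r2 K2)"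
  unfolding mycielski2_def
  by (intro myc_edge_MV myc_vert_MV K2_e01 K2_v0 K2_v1) auto

lemma psi_M2: "r1 \<ge> 1 \<Longrightarrow> r2 \<ge> 1 \<Longrightarrow>
   psi_d_min (mycielski2 r1 r2 K2) = 2 \<longleftrightarrow> (\<exists>f. SL (mycielski2 r1 r2 K2) f)"
  by (rule psi_min_iff[OF wf_M2 edge_M2]) auto

lemma hom_M2: "r1 \<ge> 2 \<Longrightarrow> r2 \<ge> 2 \<Longrightarrow> \<exists>f. graph_hom f (mycielski2 r1 r2 K2) (shift_graph 4)"
proof -
  assume a: "r1 \<ge> 2" "r2 \<ge> 2"
  have h1: "graph_hom (map_myc_vertex (fold_myc (r1 - 2))) (mycielski r2 (mycielski r1 K2)) (mycielski r2 (mycielski 2 K2))"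
    by (rule hom_map[OF hom_fold]) (use a in auto)
  have h2: "graph_hom (fold_myc (r2 - 2)) (mycielski r2 (mycielski 2 K2)) (mycielski 2 (mycielski 2 K2))"
    by (rule hom_fold) (use a in auto)
  show ?thesis unfolding mycielski2_def using hom_comp[OF hom_comp[OF h1 h2] hom_g0] by blast
qed

theorem mainTheorem7:
  fixes r1 r2 :: nat
  assumes "r1 \<ge> 1" and "r2 \<ge> 1"
  shows "(psi_d_min (mycielski2 r1 r2 K2) = 2 \<longleftrightarrow> r1 \<ge> 2 \<and> r2 \<ge> 2)
    \<and> (r1 \<ge> 2 \<and> r2 \<ge> 2 \<longrightarrow>
         (\<exists>f. graph_hom f (mycielski2 r1 r2 K2) (shift_graph 4)))
    \<and> (\<forall>r m. r \<ge> 1 \<and> m \<ge> 1 \<longrightarrow>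
         \<not> (\<exists>f. graph_hom f (mycielski2 1 r K2) (shift_graph m)) \<and>
         \<not> (\<exists>f. graph_hom f (mycielski2 r 1 K2) (shift_graph m)))"
proof (intro conjI impI allI)
  show "psi_d_min (mycielski2 r1 r2 K2) = 2 \<longleftrightarrow> r1 \<ge> 2 \<and> r2 \<ge> 2"
  proof
    assume "psi_d_min (mycielski2 r1 r2 K2) = 2"
    then obtain f where f: "SL (mycielski2 r1 r2 K2) f" using psi_M2 assms by blast
    show "r1 \<ge> 2 \<and> r2 \<ge> 2"
    proof (rule ccontr)
      assume "\<not> (r1 \<ge> 2 \<and> r2 \<ge> 2)"
      then have "r1 = 1 \<or> r2 = 1" using assms by auto
      then show False using imposs1[of r2 f] imposs2[of r1 f] f assms by auto
    qed
  next
    assume "r1 \<ge> 2 \<and> r2 \<ge> 2"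
    then obtain f where "graph_hom f (mycielski2 r1 r2 K2) (shift_graph 4)" using hom_M2 by blast
    then have "SL (mycielski2 r1 r2 K2) f" by (rule SL_of_hom)
    then show "psi_d_min (mycielski2 r1 r2 K2) = 2" using psi_M2 assms by blast
  qed
next
  assume "r1 \<ge> 2 \<and> r2 \<ge> 2"
  then show "\<exists>f. graph_hom f (mycielski2 r1 r2 K2) (shift_graph 4)" using hom_M2 by blast
next
  fix r m :: nat assume a: "r \<ge> 1 \<and> m \<ge> 1"
  show "\<not> (\<exists>f. graph_hom f (mycielski2 1 r K2) (shift_graph m))"
    using imposs1 SL_of_hom a by blast
  show "\<not> (\<exists>f. graph_hom f (mycielski2 r 1 K2) (shift_graph m))"
    using imposs2 SL_of_hom a by blast
qed

end
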